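(* There exists a system $S$ of communicating finite state machines (with peer-to-peer FIFO communication) that is $1$-synchronizable but not synchronizable.
   Context: A message set $M=(\Sigma_M,n,\mathrm{src},\mathrm{dst})$ consists of a finite set $\Sigma_M$ of messages, a number $n\ge 1$ of peers, and maps $\mathrm{src},\mathrm{dst}:\Sigma_M\to\{1,\dots,n\}$ with $\mathrm{src}(a)\neq\mathrm{dst}(a)$. Actions are $!a$ (send, performed by peer $\mathrm{src}(a)$) and $?a$ (receive, performed by peer $\mathrm{dst}(a)$), $a\in\Sigma_M$. An $M$-trace is a finite sequence of actions; $!?a$ abbreviates $!a\cdot ?a$. For a trace $\tau$: $\pi_!(\tau)$ is the sequence of messages sent in $\tau$; $\pi_?(\tau)$ the sequence of messages received; for channel $i\to j$, $\mathrm{buf}_{i\to j}(\tau)$ is the word $w$ (if it exists) such that (sent messages on channel $i\to j$ in $\tau$) $=$ (received messages on channel $i\to j$ in $\tau$)$\cdot w$. $\tau$ is FIFO (resp. $k$-bounded FIFO) if for all $i,j$ and all prefixes $\tau'$ of $\tau$, $\mathrm{buf}_{i\to j}(\tau')$ is defined (resp. defined and of length $\le k$). $\tau$ is synchronous if $\tau=!?a_1\cdots !?a_k$ for some $k\ge0$. A system $S=(P_1,\dots,P_n)$ consists of finite automata $P_i$ (all states accepting) over the actions of peer $i$. A configuration is a tuple of control states, one per peer, together with a word $w_{i,j}\in\Sigma_M^*$ (content of FIFO channel $i\to j$) for each $i\neq j$; it is stable if all channels are empty. A send $!a$ with $\mathrm{src}(a)=i,\mathrm{dst}(a)=j$ moves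 $P_i$ along a $!a$-transition and appends $a$ to $w_{i,j}$; a receive $?a$ moves $P_j$ along a $?a$-transition and removes $a$ from the head of $w_{i,j}$. The initial configuration $c_0$ has initial states and empty channels. A trace of $S$ is a $\tau$ with $c_0\xrightarrow{\tau}c$ for some $c$. $T_k(S)$ ($k\ge1$) is the set of $k$-bounded FIFO traces of $S$, $T_0(S)$ the set of synchronous traces of $S$, $T_\omega(S)=\bigcup_{k\ge0}T_k(S)$. $ST_k(S)=\{\pi_!(\tau)\mid \tau\in T_k(S)\}\cup\{(\pi_!(\tau),c)\mid c_0\xrightarrow{\tau}c,\ c\text{ stable},\ \tau\in T_k(S)\}$. $S$ is synchronizable if $ST_0(S)=ST_\omega(S)$, and $k$-synchronizable ($k\ge1$) if $ST_0(S)=ST_k(S)$. *)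

theory Defs
  imports Main
begin

(* Messages and control states are encoded as natural numbers; peers are 1..n. *)

record msgset =
  msgs :: "nat set"
  npeers :: nat
  src :: "nat \<Rightarrow> nat"
  dst :: "nat \<Rightarrow> nat"

definition wf_msgset :: "msgset \<Rightarrow> bool" where
  "wf_msgset M \<longleftrightarrow> finite (msgs M) \<and> npeers M \<ge> 1 \<and>
     (\<forall>a\<in>msgs M. src M a \<in> {1..npeers M} \<and> dst M a \<in> {1..npeers M} \<and> src M a \<noteq> dst M a)"

datatype act = Send nat | Recv nat

definition peer_actions :: "msgset \<Rightarrow> nat \<Rightarrow> act set" where
  "peer_actions M i = {Send a | a. a \<in> msgs M \<and> src M a = i} \<union> {Recv a | a. a \<in> msgs M \<and> dst M a = i}"

(* finite automaton, all states accepting *)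
record automaton =
  states :: "nat set"
  init :: nat
  trans :: "(nat \<times> act \<times> nat) set"

definition wf_peer :: "msgset \<Rightarrow> nat \<Rightarrow> automaton \<Rightarrow> bool" where
  "wf_peer M i A \<longleftrightarrow> finite (states A) \<and> init A \<in> states A \<and>
     trans A \<subseteq> states A \<times> peer_actions M i \<times> states A"

definition wf_system :: "msgset \<Rightarrow> (nat \<Rightarrow> automaton) \<Rightarrow> bool" where
  "wf_system M P \<longleftrightarrow> wf_msgset M \<and> (\<forall>i\<in>{1..npeers M}. wf_peer M i (P i))"

(* configuration: control state of each peer, content of channel i \<rightarrow> j *)
type_synonym config = "(nat \<Rightarrow> nat) \<times> (nat \<Rightarrow> nat \<Rightarrow> nat list)"

definition init_config :: "(nat \<Rightarrow> automaton) \<Rightarrow> config" where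
  "init_config P = ((\<lambda>i. init (P i)), (\<lambda>i j. []))"

definition stable :: "config \<Rightarrow> bool" where
  "stable c \<longleftrightarrow> (\<forall>i j. snd c i j = [])"

inductive step :: "msgset \<Rightarrow> (nat \<Rightarrow> automaton) \<Rightarrow> config \<Rightarrow> act \<Rightarrow> config \<Rightarrow> bool" where
  send: "\<lbrakk> a \<in> msgs M; i = src M a; j = dst M a; (fst c i, Send a, q') \<in> trans (P i) \<rbrakk>
     \<Longrightarrow> step M P c (Send a) ((fst c)(i := q'), (snd c)(i := (snd c i)(j := snd c i j @ [a])))"
| recv: "\<lbrakk> a \<in> msgs M; i = src M a; j = dst M a; snd c i j = a # w; (fst c j, Recv a, q') \<in> trans (P j) \<rbrakk>
     \<Longrightarrow> step M P c (Recv a) ((fst c)(j := q'), (snd c)(i := (snd c i)(j := w)))"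

inductive steps :: "msgset \<Rightarrow> (nat \<Rightarrow> automaton) \<Rightarrow> config \<Rightarrow> act list \<Rightarrow> config \<Rightarrow> bool" where
  nil: "steps M P c [] c"
| cons: "\<lbrakk> step M P c x c'; steps M P c' \<tau> c'' \<rbrakk> \<Longrightarrow> steps M P c (x # \<tau>) c''"

definition is_trace :: "msgset \<Rightarrow> (nat \<Rightarrow> automaton) \<Rightarrow> act list \<Rightarrow> bool" where
  "is_trace M P \<tau> \<longleftrightarrow> (\<exists>c. steps M P (init_config P) \<tau> c)"

fun sent :: "act list \<Rightarrow> nat list" where
  "sent [] = []"
| "sent (Send a # \<tau>) = a # sent \<tau>"
| "sent (Recv a # \<tau>) = sent \<tau>"

fun received :: "act list \<Rightarrow> nat list" where
  "received [] = []"
| "received (Send a # \<tau>) = received \<tau>"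
| "received (Recv a # \<tau>) = a # received \<tau>"

definition on_channel :: "msgset \<Rightarrow> nat \<Rightarrow> nat \<Rightarrow> nat list \<Rightarrow> nat list" where
  "on_channel M i j w = filter (\<lambda>a. src M a = i \<and> dst M a = j) w"

(* buf_{i\<rightarrow>j}(\<tau>) is defined and equals w *)
definition buf_is :: "msgset \<Rightarrow> nat \<Rightarrow> nat \<Rightarrow> act list \<Rightarrow> nat list \<Rightarrow> bool" where
  "buf_is M i j \<tau> w \<longleftrightarrow> on_channel M i j (sent \<tau>) = on_channel M i j (received \<tau>) @ w"

definition fifo_trace :: "msgset \<Rightarrow> act list \<Rightarrow> bool" where
  "fifo_trace M \<tau> \<longleftrightarrow> (\<forall>n i j. \<exists>w. buf_is M i j (take n \<tau>) w)"

definition bounded_fifo_trace :: "nat \<Rightarrow> msgset \<Rightarrow> act list \<Rightarrow> bool" where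
  "bounded_fifo_trace k M \<tau> \<longleftrightarrow> (\<forall>n i j. \<exists>w. buf_is M i j (take n \<tau>) w \<and> length w \<le> k)"

definition synchronous :: "act list \<Rightarrow> bool" where
  "synchronous \<tau> \<longleftrightarrow> (\<exists>as. \<tau> = concat (map (\<lambda>a. [Send a, Recv a]) as))"

definition T :: "nat \<Rightarrow> msgset \<Rightarrow> (nat \<Rightarrow> automaton) \<Rightarrow> act list set" where
  "T k M P = {\<tau>. is_trace M P \<tau> \<and> (if k = 0 then synchronous \<tau> else bounded_fifo_trace k M \<tau>)}"

definition T_omega :: "msgset \<Rightarrow> (nat \<Rightarrow> automaton) \<Rightarrow> act list set" where
  "T_omega M P = (\<Union>k. T k M P)"

(* ST from a set of traces; Inl = send sequence, Inr = (send sequence, stable configuration) *)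
definition ST_of :: "msgset \<Rightarrow> (nat \<Rightarrow> automaton) \<Rightarrow> act list set \<Rightarrow> (nat list + nat list \<times> config) set" where
  "ST_of M P Tr = {Inl (sent \<tau>) | \<tau>. \<tau> \<in> Tr} \<union>
     {Inr (sent \<tau>, c) | \<tau> c. \<tau> \<in> Tr \<and> steps M P (init_config P) \<tau> c \<and> stable c}"

definition ST :: "nat \<Rightarrow> msgset \<Rightarrow> (nat \<Rightarrow> automaton) \<Rightarrow> (nat list + nat list \<times> config) set" where
  "ST k M P = ST_of M P (T k M P)"

definition ST_omega :: "msgset \<Rightarrow> (nat \<Rightarrow> automaton) \<Rightarrow> (nat list + nat list \<times> config) set" where
  "ST_omega M P = ST_of M P (T_omega M P)"

definition synchronizable :: "msgset \<Rightarrow> (nat \<Rightarrow> automaton) \<Rightarrow> bool" where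
  "synchronizable M P \<longleftrightarrow> ST 0 M P = ST_omega M P"

definition k_synchronizable :: "nat \<Rightarrow> msgset \<Rightarrow> (nat \<Rightarrow> automaton) \<Rightarrow> bool" where
  "k_synchronizable k M P \<longleftrightarrow> ST 0 M P = ST k M P"

end

theory Submission
  imports Defs
begin

lemma sent_app[simp]: "sent (xs @ ys) = sent xs @ sent ys"
  by (induction xs rule: sent.induct) auto
lemma received_app[simp]: "received (xs @ ys) = received xs @ received ys"
  by (induction xs rule: received.induct) auto

definition chinv :: "msgset \<Rightarrow> act list \<Rightarrow> config \<Rightarrow> bool" where
  "chinv M \<tau> c \<longleftrightarrow> (\<forall>i j. on_channel M i j (sent \<tau>) = on_channel M i j (received \<tau>) @ snd c i j)"

lemma step_chinv: "step M P c x c' \<Longrightarrow> chinv M \<tau> c \<Longrightarrow> chinv M (\<tau> @ [x]) c'"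
proof (induction rule: step.induct)
  case (send a M i j c P q')
  then show ?case unfolding chinv_def on_channel_def by auto
next
  case (recv a M i j c w P q')
  then show ?case unfolding chinv_def on_channel_def by auto
qed

lemma steps_chinv: "steps M P c \<tau> c' \<Longrightarrow> chinv M \<tau>0 c \<Longrightarrow> chinv M (\<tau>0 @ \<tau>) c'"
proof (induction arbitrary: \<tau>0 rule: steps.induct)
  case (nil M P c) then show ?case by simp
next
  case (cons M P c x c' \<tau> c'')
  from cons.IH[OF step_chinv[OF cons.hyps(1) cons.prems]] show ?case by simp
qed

lemma init_chinv: "steps M P (init_config P) \<tau> c \<Longrightarrow> chinv M \<tau> c"
  using steps_chinv[of M P "init_config P" \<tau> c "[]"] by (simp add: chinv_def init_config_def on_channel_def)


lemma steps_app_split: "steps M P c (xs @ ys) c'' \<Longrightarrow> \<exists>c'. steps M P c xs c' \<and> steps M P c' ys c''"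
proof (induction xs arbitrary: c)
  case Nil then show ?case by (metis append_Nil steps.nil)
next
  case (Cons x xs)
  from Cons.prems obtain c1 where "step M P c x c1" "steps M P c1 (xs @ ys) c''"
    by (auto elim: steps.cases)
  then show ?case using Cons.IH by (meson steps.cons)
qed

lemma steps_snoc: "steps M P c xs c' \<Longrightarrow> step M P c' x c'' \<Longrightarrow> steps M P c (xs @ [x]) c''"
  by (induction rule: steps.induct) (auto intro: steps.intros)

lemma steps_snocE: "steps M P c (xs @ [x]) c'' \<Longrightarrow> \<exists>c'. steps M P c xs c' \<and> step M P c' x c''"
  by (drule steps_app_split) (auto elim: steps.cases)

definition M0 :: msgset where
  "M0 = (| msgs = {1,2,3,4}, npeers = 3, src = (\<lambda>a. if a = 4 then 3 else 1), dst = (\<lambda>a. if a = 3 then 3 else 2) |)"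

definition P0 :: "nat \<Rightarrow> automaton" where
  "P0 i = (if i = 1 then (| states = {0..3}, init = 0, trans = {(0, Send 1, 1), (1, Send 2, 2), (2, Send 3, 3)} |)
     else if i = 2 then (| states = {0..6}, init = 0, trans = {(0, Recv 1, 1), (1, Recv 2, 2), (2, Recv 4, 3), (0, Recv 4, 4), (4, Recv 1, 5), (5, Recv 2, 6)} |)
     else if i = 3 then (| states = {0..2}, init = 0, trans = {(0, Recv 3, 1), (1, Send 4, 2)} |)
     else (| states = {0}, init = 0, trans = {} |))"

lemma wf0: "wf_system M0 P0"
  unfolding wf_system_def wf_msgset_def wf_peer_def M0_def P0_def peer_actions_def
  by auto

definition R0 :: "(nat \<times> nat \<times> nat \<times> nat list \<times> nat list \<times> nat list) set" where
  "R0 = {(0,0,0,[],[],[]), (1,0,0,[1],[],[]), (1,1,0,[],[],[]), (2,1,0,[2],[],[]), (2,2,0,[],[],[]),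
         (3,1,0,[2],[3],[]), (3,1,1,[2],[],[]), (3,1,2,[2],[],[4]), (3,2,0,[],[3],[]), (3,2,1,[],[],[]),
         (3,2,2,[],[],[4]), (3,3,2,[],[],[])}"

definition Inv :: "config \<Rightarrow> bool" where
  "Inv c \<longleftrightarrow> (\<forall>i. i \<notin> {1,2,3} \<longrightarrow> fst c i = 0) \<and>
     (\<forall>i j. (i,j) \<notin> {(1,2),(1,3),(3,2)} \<longrightarrow> snd c i j = []) \<and>
     (fst c 1, fst c 2, fst c 3, snd c 1 2, snd c 1 3, snd c 3 2) \<in> R0"

definition cnt :: "config \<Rightarrow> nat" where
  "cnt c = fst c 1 + (if fst c 3 = 2 then 1 else 0)"

lemma Inv_init: "Inv (init_config P0)"
  by (simp add: Inv_def init_config_def P0_def R0_def)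

definition tup :: "config \<Rightarrow> nat \<times> nat \<times> nat \<times> nat list \<times> nat list \<times> nat list" where
  "tup c = (fst c 1, fst c 2, fst c 3, snd c 1 2, snd c 1 3, snd c 3 2)"

abbreviation "L4 \<equiv> [1,2,3,4::nat]"

lemma P0_1: "trans (P0 1) = {(0, Send 1, 1), (1, Send 2, 2), (2, Send 3, 3)}"
  by (simp add: P0_def)
lemma P0_2: "trans (P0 2) = {(0, Recv 1, 1), (1, Recv 2, 2), (2, Recv 4, 3), (0, Recv 4, 4), (4, Recv 1, 5), (5, Recv 2, 6)}"
  by (simp add: P0_def)
lemma P0_3: "trans (P0 3) = {(0, Recv 3, 1), (1, Send 4, 2)}"
  by (simp add: P0_def)


lemma R0_send1:
  assumes "(p1,p2,p3,l1,l2,l3) \<in> R0" "(p1, Send 1, q') \<in> trans (P0 1)" "length (l1 @ [1]) \<le> 1"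
  shows "(q', p2, p3, l1 @ [1], l2, l3) \<in> R0 \<and> [1] = drop (p1 + (if p3 = 2 then 1 else 0)) (take (q' + (if p3 = 2 then 1 else 0)) L4)"
  using assms unfolding R0_def P0_1 by auto
lemma R0_send2:
  assumes "(p1,p2,p3,l1,l2,l3) \<in> R0" "(p1, Send 2, q') \<in> trans (P0 1)" "length (l1 @ [2]) \<le> 1"
  shows "(q', p2, p3, l1 @ [2], l2, l3) \<in> R0 \<and> [2] = drop (p1 + (if p3 = 2 then 1 else 0)) (take (q' + (if p3 = 2 then 1 else 0)) L4)"
  using assms unfolding R0_def P0_1 by auto
lemma R0_send3:
  assumes "(p1,p2,p3,l1,l2,l3) \<in> R0" "(p1, Send 3, q') \<in> trans (P0 1)" "length (l2 @ [3]) \<le> 1"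
  shows "(q', p2, p3, l1, l2 @ [3], l3) \<in> R0 \<and> [3] = drop (p1 + (if p3 = 2 then 1 else 0)) (take (q' + (if p3 = 2 then 1 else 0)) L4)"
  using assms unfolding R0_def P0_1 by auto
lemma R0_send4:
  assumes "(p1,p2,p3,l1,l2,l3) \<in> R0" "(p3, Send 4, q') \<in> trans (P0 3)" "length (l3 @ [4]) \<le> 1"
  shows "(p1, p2, q', l1, l2, l3 @ [4]) \<in> R0 \<and> [4] = drop (p1 + (if p3 = 2 then 1 else 0)) (take (p1 + (if q' = 2 then 1 else 0)) L4)"
  using assms unfolding R0_def P0_3 by auto

lemma R0_recv1:
  assumes "(p1,p2,p3,l1,l2,l3) \<in> R0" "l1 = 1 # w" "(p2, Recv 1, q') \<in> trans (P0 2)"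
  shows "(p1, q', p3, w, l2, l3) \<in> R0"
proof -
  from assms(1,2) have "(p1,p2,p3,w,l2,l3) \<in> {(1,0,0,[],[],[])}"
    unfolding R0_def by auto
  moreover from assms(3) have "(p2 = 0 \<and> q' = 1) \<or> (p2 = 4 \<and> q' = 5)" unfolding P0_2 by auto
  ultimately show ?thesis unfolding R0_def
    apply (simp only: insert_iff empty_iff prod.inject)
    apply (elim disjE conjE; simp)
    done
qed
lemma R0_recv2:
  assumes "(p1,p2,p3,l1,l2,l3) \<in> R0" "l1 = 2 # w" "(p2, Recv 2, q') \<in> trans (P0 2)"
  shows "(p1, q', p3, w, l2, l3) \<in> R0"
proof -
  from assms(1,2) have "(p1,p2,p3,w,l2,l3) \<in> {(2,1,0,[],[],[]), (3,1,0,[],[3],[]), (3,1,1,[],[],[]), (3,1,2,[],[],[4])}"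
    unfolding R0_def by auto
  moreover from assms(3) have "(p2 = 1 \<and> q' = 2) \<or> (p2 = 5 \<and> q' = 6)" unfolding P0_2 by auto
  ultimately show ?thesis unfolding R0_def
    apply (simp only: insert_iff empty_iff prod.inject)
    apply (elim disjE conjE; simp)
    done
qed
lemma R0_recv3:
  assumes "(p1,p2,p3,l1,l2,l3) \<in> R0" "l2 = 3 # w" "(p3, Recv 3, q') \<in> trans (P0 3)"
  shows "(p1, p2, q', l1, w, l3) \<in> R0 \<and> q' \<noteq> 2 \<and> p3 \<noteq> 2"
proof -
  from assms(1,2) have "(p1,p2,p3,l1,w,l3) \<in> {(3,1,0,[2],[],[]), (3,2,0,[],[],[])}"
    unfolding R0_def by auto
  moreover from assms(3) have "p3 = 0 \<and> q' = 1" unfolding P0_3 by auto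
  ultimately show ?thesis unfolding R0_def
    apply (simp only: insert_iff empty_iff prod.inject)
    apply (elim disjE conjE; simp)
    done
qed
lemma R0_recv4:
  assumes "(p1,p2,p3,l1,l2,l3) \<in> R0" "l3 = 4 # w" "(p2, Recv 4, q') \<in> trans (P0 2)"
  shows "(p1, q', p3, l1, l2, w) \<in> R0"
proof -
  from assms(1,2) have "(p1,p2,p3,l1,l2,w) \<in> {(3,1,2,[2],[],[]), (3,2,2,[],[],[])}"
    unfolding R0_def by auto
  moreover from assms(3) have "(p2 = 2 \<and> q' = 3) \<or> (p2 = 0 \<and> q' = 4)" unfolding P0_2 by auto
  ultimately show ?thesis unfolding R0_def
    apply (simp only: insert_iff empty_iff prod.inject)
    apply (elim disjE conjE; simp)
    done
qed

lemma M0_simps[simp]: "msgs M0 = {1,2,3,4}" "src M0 a = (if a = 4 then 3 else 1)" "dst M0 a = (if a = 3 then 3 else 2)"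
  by (simp_all add: M0_def)

lemma Inv_step:
  assumes I: "Inv c" and st: "step M0 P0 c x c'" and len: "\<forall>i j. length (snd c' i j) \<le> 1"
  shows "Inv c' \<and> sent [x] = drop (cnt c) (take (cnt c') L4)"
  using st
proof (cases rule: step.cases)
  case (send a i j q')
  from I have T: "(fst c 1, fst c 2, fst c 3, snd c 1 2, snd c 1 3, snd c 3 2) \<in> R0"
    and O1: "\<forall>i. i \<notin> {1,2,3} \<longrightarrow> fst c i = 0"
    and O2: "\<forall>i j. (i,j) \<notin> {(1,2),(1,3),(3,2)} \<longrightarrow> snd c i j = []"
    unfolding Inv_def by auto
  from send have "a = 1 \<or> a = 2 \<or> a = 3 \<or> a = 4" by auto
  then show ?thesis
  proof (elim disjE)
    assume a: "a = 1"
    with send have ij: "i = 1" "j = 2" by auto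
    have l: "length (snd c 1 2 @ [1]) \<le> 1" using len[rule_format, of 1 2] send a ij by simp
    have tr: "(fst c 1, Send 1, q') \<in> trans (P0 1)" using send a ij by simp
    from R0_send1[OF T tr l] have R: "(q', fst c 2, fst c 3, snd c 1 2 @ [1], snd c 1 3, snd c 3 2) \<in> R0 \<and> [1] = drop (fst c 1 + (if fst c 3 = 2 then 1 else 0)) (take (q' + (if fst c 3 = 2 then 1 else 0)) L4)"
      by blast
    show ?thesis using R O1 O2 send a ij unfolding Inv_def cnt_def by auto
  next
    assume a: "a = 2"
    with send have ij: "i = 1" "j = 2" by auto
    have l: "length (snd c 1 2 @ [2]) \<le> 1" using len[rule_format, of 1 2] send a ij by simp
    have tr: "(fst c 1, Send 2, q') \<in> trans (P0 1)" using send a ij by simp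
    from R0_send2[OF T tr l] have R: "(q', fst c 2, fst c 3, snd c 1 2 @ [2], snd c 1 3, snd c 3 2) \<in> R0 \<and> [2] = drop (fst c 1 + (if fst c 3 = 2 then 1 else 0)) (take (q' + (if fst c 3 = 2 then 1 else 0)) L4)"
      by blast
    show ?thesis using R O1 O2 send a ij unfolding Inv_def cnt_def by auto
  next
    assume a: "a = 3"
    with send have ij: "i = 1" "j = 3" by auto
    have l: "length (snd c 1 3 @ [3]) \<le> 1" using len[rule_format, of 1 3] send a ij by simp
    have tr: "(fst c 1, Send 3, q') \<in> trans (P0 1)" using send a ij by simp
    from R0_send3[OF T tr l] have R: "(q', fst c 2, fst c 3, snd c 1 2, snd c 1 3 @ [3], snd c 3 2) \<in> R0 \<and> [3] = drop (fst c 1 + (if fst c 3 = 2 then 1 else 0)) (take (q' + (if fst c 3 = 2 then 1 else 0)) L4)"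
      by blast
    show ?thesis using R O1 O2 send a ij unfolding Inv_def cnt_def by auto
  next
    assume a: "a = 4"
    with send have ij: "i = 3" "j = 2" by auto
    have l: "length (snd c 3 2 @ [4]) \<le> 1" using len[rule_format, of 3 2] send a ij by simp
    have tr: "(fst c 3, Send 4, q') \<in> trans (P0 3)" using send a ij by simp
    from R0_send4[OF T tr l] have R: "(fst c 1, fst c 2, q', snd c 1 2, snd c 1 3, snd c 3 2 @ [4]) \<in> R0 \<and> [4] = drop (fst c 1 + (if fst c 3 = 2 then 1 else 0)) (take (fst c 1 + (if q' = 2 then 1 else 0)) L4)"
      by blast
    show ?thesis using R O1 O2 send a ij unfolding Inv_def cnt_def by auto
  qed
next
  case (recv a i j w q')
  from I have T: "(fst c 1, fst c 2, fst c 3, snd c 1 2, snd c 1 3, snd c 3 2) \<in> R0"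
    and O1: "\<forall>i. i \<notin> {1,2,3} \<longrightarrow> fst c i = 0"
    and O2: "\<forall>i j. (i,j) \<notin> {(1,2),(1,3),(3,2)} \<longrightarrow> snd c i j = []"
    unfolding Inv_def by auto
  from recv have "a = 1 \<or> a = 2 \<or> a = 3 \<or> a = 4" by auto
  then show ?thesis
  proof (elim disjE)
    assume a: "a = 1"
    with recv have ij: "i = 1" "j = 2" by auto
    have tr: "(fst c 2, Recv 1, q') \<in> trans (P0 2)" using recv a ij by simp
    have ch: "snd c 1 2 = 1 # w" using recv a ij by simp
    from R0_recv1[OF T ch tr] have R: "(fst c 1, q', fst c 3, w, snd c 1 3, snd c 3 2) \<in> R0" by blast
    show ?thesis using R O1 O2 recv a ij unfolding Inv_def cnt_def by auto
  next
    assume a: "a = 2"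
    with recv have ij: "i = 1" "j = 2" by auto
    have tr: "(fst c 2, Recv 2, q') \<in> trans (P0 2)" using recv a ij by simp
    have ch: "snd c 1 2 = 2 # w" using recv a ij by simp
    from R0_recv2[OF T ch tr] have R: "(fst c 1, q', fst c 3, w, snd c 1 3, snd c 3 2) \<in> R0" by blast
    show ?thesis using R O1 O2 recv a ij unfolding Inv_def cnt_def by auto
  next
    assume a: "a = 3"
    with recv have ij: "i = 1" "j = 3" by auto
    have tr: "(fst c 3, Recv 3, q') \<in> trans (P0 3)" using recv a ij by simp
    have ch: "snd c 1 3 = 3 # w" using recv a ij by simp
    from R0_recv3[OF T ch tr] have R: "(fst c 1, fst c 2, q', snd c 1 2, w, snd c 3 2) \<in> R0 \<and> q' \<noteq> 2 \<and> fst c 3 \<noteq> 2" by blast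
    show ?thesis using R O1 O2 recv a ij unfolding Inv_def cnt_def by auto
  next
    assume a: "a = 4"
    with recv have ij: "i = 3" "j = 2" by auto
    have tr: "(fst c 2, Recv 4, q') \<in> trans (P0 2)" using recv a ij by simp
    have ch: "snd c 3 2 = 4 # w" using recv a ij by simp
    from R0_recv4[OF T ch tr] have R: "(fst c 1, q', fst c 3, snd c 1 2, snd c 1 3, w) \<in> R0" by blast
    show ?thesis using R O1 O2 recv a ij unfolding Inv_def cnt_def by auto
  qed
qed

lemma cnt_step_recv:
  assumes "step M0 P0 c (Recv a) c'" shows "cnt c' = cnt c"
  using assms
proof (cases rule: step.cases)
  case (recv i j w q')
  then show ?thesis unfolding cnt_def by (auto simp: P0_3 split: if_splits)
qed

lemma drop_take_ne: "drop a (take b ys) = z # zs \<Longrightarrow> a \<le> b"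
proof (rule ccontr)
  assume "drop a (take b ys) = z # zs" "\<not> a \<le> b"
  then have "length (drop a (take b ys)) = 0" by simp
  then show False using \<open>drop a (take b ys) = z # zs\<close> by simp
qed

lemma Inv_step2:
  assumes "Inv c" "step M0 P0 c x c'" "\<forall>i j. length (snd c' i j) \<le> 1"
  shows "Inv c' \<and> sent [x] = drop (cnt c) (take (cnt c') L4) \<and> cnt c \<le> cnt c'"
proof -
  have A: "Inv c' \<and> sent [x] = drop (cnt c) (take (cnt c') L4)" using Inv_step[OF assms] .
  have "cnt c \<le> cnt c'"
  proof (cases x)
    case (Send a)
    then have "drop (cnt c) (take (cnt c') L4) = a # []" using A by simp
    then show ?thesis by (rule drop_take_ne)
  next
    case (Recv a)
    then show ?thesis using cnt_step_recv assms(2) by simp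
  qed
  with A show ?thesis by simp
qed

lemma bounded_snoc: "bounded_fifo_trace k M (\<tau> @ [x]) \<Longrightarrow> bounded_fifo_trace k M \<tau>"
  unfolding bounded_fifo_trace_def
proof (intro allI)
  fix n i j
  assume H: "\<forall>n i j. \<exists>w. buf_is M i j (take n (\<tau> @ [x])) w \<and> length w \<le> k"
  have "take n \<tau> = take (min n (length \<tau>)) (\<tau> @ [x])" by (simp add: min_def)
  then show "\<exists>w. buf_is M i j (take n \<tau>) w \<and> length w \<le> k" using H by metis
qed

lemma bounded_len:
  assumes "steps M P (init_config P) \<tau> c" "bounded_fifo_trace k M \<tau>"
  shows "length (snd c i j) \<le> k"
proof -
  from assms(2) obtain w where w: "buf_is M i j (take (length \<tau>) \<tau>) w" "length w \<le> k"
    unfolding bounded_fifo_trace_def by blast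
  from init_chinv[OF assms(1)] w(1) have "w = snd c i j"
    unfolding chinv_def buf_is_def by simp
  with w(2) show ?thesis by simp
qed

lemma T1_Inv:
  "steps M0 P0 (init_config P0) \<tau> c \<Longrightarrow> bounded_fifo_trace 1 M0 \<tau> \<Longrightarrow> Inv c \<and> sent \<tau> = take (cnt c) L4"
proof (induction \<tau> arbitrary: c rule: rev_induct)
  case Nil
  then have "c = init_config P0" by (auto elim: steps.cases)
  then show ?case using Inv_init by (simp add: cnt_def init_config_def P0_def)
next
  case (snoc x xs)
  from steps_snocE[OF snoc.prems(1)] obtain c1 where c1: "steps M0 P0 (init_config P0) xs c1" "step M0 P0 c1 x c" by blast
  from snoc.IH[OF c1(1) bounded_snoc[OF snoc.prems(2)]] have I: "Inv c1" "sent xs = take (cnt c1) L4" by auto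
  have "\<forall>i j. length (snd c i j) \<le> 1" using bounded_len[OF snoc.prems] by blast
  from Inv_step2[OF I(1) c1(2) this] have S: "Inv c" "sent [x] = drop (cnt c1) (take (cnt c) L4)" "cnt c1 \<le> cnt c" by auto
  have "sent (xs @ [x]) = take (cnt c1) (take (cnt c) L4) @ drop (cnt c1) (take (cnt c) L4)"
    using I(2) S(2,3) by (simp add: min_def)
  also have "\<dots> = take (cnt c) L4" by (rule append_take_drop_id)
  finally show ?case using S(1) by simp
qed

abbreviation pairs :: "nat list \<Rightarrow> act list" where
  "pairs as \<equiv> concat (map (\<lambda>a. [Send a, Recv a]) as)"

lemma sent_pairs[simp]: "sent (pairs as) = as" by (induction as) auto
lemma received_pairs[simp]: "received (pairs as) = as" by (induction as) auto

lemma take_pairs: "\<exists>bs. take n (pairs as) = pairs bs \<or> (\<exists>a. take n (pairs as) = pairs bs @ [Send a])"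
proof (induction as arbitrary: n)
  case Nil then show ?case by (intro exI[of _ "[]"]) simp
next
  case (Cons a as)
  show ?case
  proof (cases n)
    case 0 then show ?thesis by (intro exI[of _ "[]"]) simp
  next
    case (Suc m)
    show ?thesis
    proof (cases m)
      case 0 then show ?thesis using Suc by (intro exI[of _ "[]"]) auto
    next
      case (Suc k)
      from Cons.IH[of k] obtain bs where "take k (pairs as) = pairs bs \<or> (\<exists>a. take k (pairs as) = pairs bs @ [Send a])" by blast
      then show ?thesis using \<open>n = Suc m\<close> Suc by (intro exI[of _ "a # bs"]) auto
    qed
  qed
qed

lemma sync_bounded: "synchronous \<tau> \<Longrightarrow> bounded_fifo_trace 1 M \<tau>"
  unfolding synchronous_def bounded_fifo_trace_def
proof (elim exE, intro allI)
  fix as n i j assume t: "\<tau> = pairs as"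
  from take_pairs[of n as] obtain bs where
    "take n (pairs as) = pairs bs \<or> (\<exists>a. take n (pairs as) = pairs bs @ [Send a])" by blast
  then show "\<exists>w. buf_is M i j (take n \<tau>) w \<and> length w \<le> 1"
  proof (elim disjE exE)
    assume "take n (pairs as) = pairs bs"
    then show ?thesis using t by (intro exI[of _ "[]"]) (simp add: buf_is_def)
  next
    fix a assume "take n (pairs as) = pairs bs @ [Send a]"
    then show ?thesis using t
      by (intro exI[of _ "on_channel M i j [a]"]) (auto simp: buf_is_def on_channel_def)
  qed
qed

lemma T0_T1: "T 0 M P \<subseteq> T 1 M P"
  unfolding T_def using sync_bounded by auto

lemma ST_mono: "A \<subseteq> B \<Longrightarrow> ST_of M P A \<subseteq> ST_of M P B"
  unfolding ST_of_def by blast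

lemma stepS: "a \<in> msgs M \<Longrightarrow> (fst c (src M a), Send a, q') \<in> trans (P (src M a)) \<Longrightarrow>
  c' = ((fst c)(src M a := q'), (snd c)(src M a := (snd c (src M a))(dst M a := snd c (src M a) (dst M a) @ [a])))
  \<Longrightarrow> step M P c (Send a) c'"
  by (simp add: step.send)
lemma stepR: "a \<in> msgs M \<Longrightarrow> snd c (src M a) (dst M a) = a # w \<Longrightarrow> (fst c (dst M a), Recv a, q') \<in> trans (P (dst M a)) \<Longrightarrow>
  c' = ((fst c)(dst M a := q'), (snd c)(src M a := (snd c (src M a))(dst M a := w)))
  \<Longrightarrow> step M P c (Recv a) c'"
  by (simp add: step.recv)

lemma steps_nil_eq: "c = c' \<Longrightarrow> steps M P c [] c'" by (simp add: steps.nil)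

definition syn :: "nat \<Rightarrow> act list" where "syn n = pairs (take n L4)"

lemma syn4_eq: "syn 4 = [Send 1, Recv 1, Send 2, Recv 2, Send 3, Recv 3, Send 4, Recv 4]"
  by (simp add: syn_def)
lemma syn4_steps: "\<exists>c. steps M0 P0 (init_config P0) [Send 1, Recv 1, Send 2, Recv 2, Send 3, Recv 3, Send 4, Recv 4] c"
  apply (rule exI)
  apply (rule steps.cons, rule stepS[where q'=1], simp, simp add: P0_def init_config_def, rule refl)
  apply (rule steps.cons, rule stepR[where q'=1 and w="[]"], simp, simp add: init_config_def, simp add: P0_def init_config_def, rule refl)
  apply (rule steps.cons, rule stepS[where q'=2], simp, simp add: P0_def init_config_def, rule refl)
  apply (rule steps.cons, rule stepR[where q'=2 and w="[]"], simp, simp add: init_config_def, simp add: P0_def init_config_def, rule refl)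
  apply (rule steps.cons, rule stepS[where q'=3], simp, simp add: P0_def init_config_def, rule refl)
  apply (rule steps.cons, rule stepR[where q'=1 and w="[]"], simp, simp add: init_config_def, simp add: P0_def init_config_def, rule refl)
  apply (rule steps.cons, rule stepS[where q'=2], simp, simp add: P0_def init_config_def, rule refl)
  apply (rule steps.cons, rule stepR[where q'=3 and w="[]"], simp, simp add: init_config_def, simp add: P0_def init_config_def, rule refl)
  apply (rule steps.nil)
  done

lemma syn4_trace: "is_trace M0 P0 (syn 4)"
  unfolding is_trace_def syn4_eq by (rule syn4_steps)

definition tw :: "act list" where "tw = [Send 1, Send 2, Send 3, Recv 3, Send 4, Recv 4, Recv 1, Recv 2]"
definition cw :: config where "cw = ((\<lambda>i. if i = 1 then 3 else if i = 2 then 6 else if i = 3 then 2 else 0), (\<lambda>i j. []))"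

lemma tw_steps: "steps M0 P0 (init_config P0) tw cw"
  unfolding tw_def
  apply (rule steps.cons, rule stepS[where q'=1], simp, simp add: P0_def init_config_def, rule refl)
  apply (rule steps.cons, rule stepS[where q'=2], simp, simp add: P0_def init_config_def, rule refl)
  apply (rule steps.cons, rule stepS[where q'=3], simp, simp add: P0_def init_config_def, rule refl)
  apply (rule steps.cons, rule stepR[where q'=1 and w="[]"], simp, simp add: init_config_def, simp add: P0_def init_config_def, rule refl)
  apply (rule steps.cons, rule stepS[where q'=2], simp, simp add: P0_def init_config_def, rule refl)
  apply (rule steps.cons, rule stepR[where q'=4 and w="[]"], simp, simp add: init_config_def, simp add: P0_def init_config_def, rule refl)
  apply (rule steps.cons, rule stepR[where q'=5 and w="[2]"], simp, simp add: init_config_def, simp add: P0_def init_config_def, rule refl)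
  apply (rule steps.cons, rule stepR[where q'=6 and w="[]"], simp, simp add: init_config_def, simp add: P0_def init_config_def, rule refl)
  apply (rule steps_nil_eq)
  apply (simp add: cw_def init_config_def prod_eq_iff)
  apply (rule conjI)
   apply (rule ext, simp add: P0_def)
  apply (rule ext, rule ext, simp)
  done

lemma Inv_facts: "Inv c \<Longrightarrow> cnt c \<le> 4 \<and> fst c 2 \<le> 3"
  unfolding Inv_def R0_def cnt_def by auto

lemma stable_vals: "Inv c \<Longrightarrow> stable c \<Longrightarrow>
   fst c 1 = [0,1,2,3,3] ! cnt c \<and> fst c 2 = [0,1,2,2,3] ! cnt c \<and> fst c 3 = [0,0,0,1,2] ! cnt c"
proof -
  assume I: "Inv c" and S: "stable c"
  from S have "snd c 1 2 = []" "snd c 1 3 = []" "snd c 3 2 = []" unfolding stable_def by auto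
  with I have "(fst c 1, fst c 2, fst c 3) \<in> {(0,0,0),(1,1,0),(2,2,0),(3,2,1),(3,3,2)}"
    unfolding Inv_def R0_def by auto
  then show ?thesis unfolding cnt_def by auto
qed

lemma stable_eq:
  assumes "Inv c" "Inv c'" "stable c" "stable c'" "cnt c = cnt c'"
  shows "c = c'"
proof -
  have f: "fst c = fst c'"
  proof
    fix i
    show "fst c i = fst c' i"
    proof (cases "i \<in> {1,2,3}")
      case True
      then show ?thesis using stable_vals[OF assms(1,3)] stable_vals[OF assms(2,4)] assms(5) by auto
    next
      case False
      then show ?thesis using assms(1,2) unfolding Inv_def by auto
    qed
  qed
  have "snd c = snd c'" using assms(3,4) unfolding stable_def by (auto simp: fun_eq_iff)
  with f show ?thesis by (simp add: prod_eq_iff)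
qed

lemma sync_stable: "steps M P (init_config P) \<tau> c \<Longrightarrow> synchronous \<tau> \<Longrightarrow> stable c"
  using init_chinv[of M P \<tau> c] unfolding synchronous_def stable_def chinv_def by auto

lemma syn_T0: "syn n \<in> T 0 M0 P0"
proof -
  have t4: "take 4 L4 = L4" by simp
  have "syn n @ pairs (drop n L4) = pairs (take n L4 @ drop n L4)"
    by (simp only: syn_def map_append concat_append)
  also have "\<dots> = syn 4" by (simp only: syn_def append_take_drop_id t4)
  finally have "syn 4 = syn n @ pairs (drop n L4)" by simp
  then have "is_trace M0 P0 (syn n)" using syn4_trace steps_app_split unfolding is_trace_def by metis
  then show ?thesis unfolding T_def synchronous_def syn_def by auto
qed

lemma sent_syn: "sent (syn n) = take n L4" unfolding syn_def by simp

lemma take_L4_inj: "a \<le> 4 \<Longrightarrow> b \<le> 4 \<Longrightarrow> take a L4 = take b L4 \<Longrightarrow> a = b"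
  by (drule arg_cong[where f=length]) simp

lemma ST1_sub: "ST 1 M0 P0 \<subseteq> ST 0 M0 P0"
proof
  fix x assume "x \<in> ST 1 M0 P0"
  then consider (l) \<tau> where "x = Inl (sent \<tau>)" "\<tau> \<in> T 1 M0 P0"
    | (r) \<tau> c where "x = Inr (sent \<tau>, c)" "\<tau> \<in> T 1 M0 P0" "steps M0 P0 (init_config P0) \<tau> c" "stable c"
    unfolding ST_def ST_of_def by blast
  then show "x \<in> ST 0 M0 P0"
  proof cases
    case l
    then obtain c where c: "steps M0 P0 (init_config P0) \<tau> c" "bounded_fifo_trace 1 M0 \<tau>"
      unfolding T_def is_trace_def by auto
    from T1_Inv[OF c] have "sent \<tau> = sent (syn (cnt c))" by (simp add: sent_syn)
    then show ?thesis using l(1) syn_T0[of "cnt c"] unfolding ST_def ST_of_def by auto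
  next
    case r
    then have b: "bounded_fifo_trace 1 M0 \<tau>" unfolding T_def by auto
    from T1_Inv[OF r(3) b] have I: "Inv c" "sent \<tau> = take (cnt c) L4" by auto
    have sT: "syn (cnt c) \<in> T 0 M0 P0" by (rule syn_T0)
    then obtain c' where c': "steps M0 P0 (init_config P0) (syn (cnt c)) c'"
      unfolding T_def is_trace_def by auto
    have sy: "synchronous (syn (cnt c))" unfolding synchronous_def syn_def by auto
    from T1_Inv[OF c' sync_bounded[OF sy]] have I': "Inv c'" "sent (syn (cnt c)) = take (cnt c') L4" by auto
    have "cnt c = cnt c'" using I' Inv_facts[OF I(1)] Inv_facts[OF I'(1)] take_L4_inj sent_syn by metis
    then have "c = c'" using stable_eq[OF I(1) I'(1) r(4) sync_stable[OF c' sy]] by simp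
    then show ?thesis using r(1) I(2) sT c' r(4) sent_syn unfolding ST_def ST_of_def by fastforce
  qed
qed

lemma L4_chan: "length (on_channel M0 i j L4) \<le> 2"
  unfolding on_channel_def by auto

lemma tw_bounded: "bounded_fifo_trace 2 M0 tw"
  unfolding bounded_fifo_trace_def
proof (intro allI)
  fix n i j
  have "tw = take n tw @ drop n tw" by simp
  then obtain cn where cn: "steps M0 P0 (init_config P0) (take n tw) cn"
    using tw_steps steps_app_split by metis
  from init_chinv[OF cn] have B: "buf_is M0 i j (take n tw) (snd cn i j)"
    unfolding chinv_def buf_is_def by auto
  have "length (snd cn i j) \<le> length (on_channel M0 i j (sent (take n tw)))"
    using B unfolding buf_is_def by (metis le_add2 length_append)
  also have "\<dots> \<le> length (on_channel M0 i j (sent tw))"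
  proof -
    have "sent tw = sent (take n tw) @ sent (drop n tw)" by (metis append_take_drop_id sent_app)
    then show ?thesis unfolding on_channel_def by simp
  qed
  also have "\<dots> \<le> 2" using L4_chan by (simp add: tw_def)
  finally show "\<exists>w. buf_is M0 i j (take n tw) w \<and> length w \<le> 2" using B by blast
qed

theorem theorem2p3:
  shows "\<exists>M P. wf_system M P \<and> k_synchronizable 1 M P \<and> \<not> synchronizable M P"
proof (intro exI conjI)
  show "wf_system M0 P0" by (rule wf0)
  show "k_synchronizable 1 M0 P0"
    unfolding k_synchronizable_def
    using ST1_sub ST_mono[OF T0_T1, of M0 P0] unfolding ST_def by blast
  show "\<not> synchronizable M0 P0"
  proof
    assume "synchronizable M0 P0"
    then have E: "ST 0 M0 P0 = ST_omega M0 P0" unfolding synchronizable_def .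
    have "is_trace M0 P0 tw" unfolding is_trace_def using tw_steps by blast
    then have "tw \<in> T 2 M0 P0" unfolding T_def using tw_bounded by simp
    then have "tw \<in> T_omega M0 P0" unfolding T_omega_def by blast
    moreover have "stable cw" unfolding stable_def cw_def by simp
    ultimately have "Inr (sent tw, cw) \<in> ST_omega M0 P0"
      unfolding ST_omega_def ST_of_def using tw_steps by blast
    with E have "Inr (sent tw, cw) \<in> ST 0 M0 P0" by simp
    then obtain \<tau> where t: "\<tau> \<in> T 0 M0 P0" "steps M0 P0 (init_config P0) \<tau> cw"
      unfolding ST_def ST_of_def by auto
    then have "bounded_fifo_trace 1 M0 \<tau>" using T0_T1 unfolding T_def by auto
    from T1_Inv[OF t(2) this] have "Inv cw" by auto
    from Inv_facts[OF this] show False by (simp add: cw_def)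
  qed
qed

end
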